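(* Let $L\in\mathbb N$, let $\Lambda=\Lambda_L$, and let $W=S_1C_1S_2C_2$ be a walk of the form described below. Then there is a unitary operator (walk) $W_d$ on $\mathcal H$ such that $W_L=P_LW_dP_L^*$ is unitary on $P_L\mathcal H=\ell^2(\Lambda_L)\otimes\mathbb C^2$, and $W-W_d$ differs from zero only on the set $(\Delta\Lambda)_2=\{x\in\mathbb Z^2:\operatorname{dist}(x,\Delta\Lambda)\le 2\}$, i.e. $\langle x,s|(W-W_d)|y,s'\rangle=0$ unless $x,y\in(\Delta\Lambda)_2$.
   Context: $\mathcal H=\ell^2(\mathbb Z^2)\otimes\mathbb C^2$ with basis $|x,s\rangle$, $x\in\mathbb Z^2$, $s\in\{\pm1\}$. A walk of the considered form is $W=S_1C_1S_2C_2$, where each coin operator $C_j=\bigoplus_{x\in\mathbb Z^2}C_j(x)$ acts as $|x\rangle\otimes\psi\mapsto|x\rangle\otimes C_j(x)\psi$ with $C_j(x)$ a unitary $2\times2$ matrix, and the state-dependent shifts are $S_\alpha=\sum_{s=\pm1}t_\alpha^s\otimes P_s$, where $t_\alpha|x\rangle=|x+e_\alpha\rangle$ and $P_{\pm1}$ is the projection onto $|{\pm1}\rangle$. $\Lambda_L=\{x\in\mathbb Z^2:|x_1|\le L,|x_2|\le L\}$, $P_L:\mathcal H\to\ell^2(\Lambda_L)\otimes\mathbb C^2$ is the canonical projection, and $\Delta\Lambda$ is the boundary of the square $\{x:-L-1\le x_1\le L,\ -L-1\le x_2\le L\}$, i.e. the set of its points with $x_1\in\{-L-1,L\}$ or $x_2\in\{-L-1,L\}$.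 $\operatorname{dist}$ denotes the Euclidean distance in $\mathbb Z^2$. *)

theory Defs
  imports "HOL-Analysis.Analysis"
begin

text \<open>Basis vectors |x,s> of H = l2(Z^2) (x) C^2 are indexed by (x,s) with x :: int \<times> int
  and the spin s encoded as a bool: True stands for s = +1, False for s = -1.
  Operators on H are represented by their matrix elements (kernels):
  K (x,s) (y,s') = <x,s| K |y,s'>.\<close>

type_synonym idx = "(int \<times> int) \<times> bool"
type_synonym kernel = "idx \<Rightarrow> idx \<Rightarrow> complex"

definition spin_val :: "bool \<Rightarrow> int" where
  "spin_val s = (if s then 1 else -1)"

definition unit_vec :: "nat \<Rightarrow> int \<times> int" where
  "unit_vec \<alpha> = (if \<alpha> = 1 then (1, 0) else (0, 1))"

definition kmult :: "kernel \<Rightarrow> kernel \<Rightarrow> kernel" where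
  "kmult A B a c = (\<Sum>\<^sub>\<infinity> b. A a b * B b c)"

definition kadj :: "kernel \<Rightarrow> kernel" where
  "kadj A a b = cnj (A b a)"

definition kid :: kernel where
  "kid a b = (if a = b then 1 else 0)"

text \<open>The kernel K defines a bounded operator on l2: boundedness tested on finitely
  supported vectors (which are dense).\<close>
definition kbounded :: "kernel \<Rightarrow> bool" where
  "kbounded K \<longleftrightarrow> (\<exists>B. \<forall>f :: idx \<Rightarrow> complex. finite {b. f b \<noteq> 0} \<longrightarrow>
      ((\<lambda>a. (cmod (\<Sum>b\<in>{b. f b \<noteq> 0}. K a b * f b))\<^sup>2) summable_on UNIV) \<and>
      (\<Sum>\<^sub>\<infinity> a. (cmod (\<Sum>b\<in>{b. f b \<noteq> 0}. K a b * f b))\<^sup>2)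
         \<le> B * (\<Sum>b\<in>{b. f b \<noteq> 0}. (cmod (f b))\<^sup>2))"

definition kunitary :: "kernel \<Rightarrow> bool" where
  "kunitary K \<longleftrightarrow> kbounded K \<and> kmult (kadj K) K = kid \<and> kmult K (kadj K) = kid"

text \<open>The compression of K to the finite-dimensional subspace spanned by the basis
  vectors indexed by A (i.e. P K P^* for the canonical projection P) is unitary there.\<close>
definition kunitary_on :: "idx set \<Rightarrow> kernel \<Rightarrow> bool" where
  "kunitary_on A K \<longleftrightarrow>
     (\<forall>a\<in>A. \<forall>c\<in>A. (\<Sum>b\<in>A. cnj (K b a) * K b c) = kid a c) \<and>
     (\<forall>a\<in>A. \<forall>c\<in>A. (\<Sum>b\<in>A. K a b * cnj (K c b)) = kid a c)"

definition unitary2 :: "(bool \<Rightarrow> bool \<Rightarrow> complex) \<Rightarrow> bool" where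
  "unitary2 M \<longleftrightarrow>
     (\<forall>a c. (\<Sum>b\<in>UNIV. cnj (M b a) * M b c) = (if a = c then 1 else 0)) \<and>
     (\<forall>a c. (\<Sum>b\<in>UNIV. M a b * cnj (M c b)) = (if a = c then 1 else 0))"

definition shift :: "nat \<Rightarrow> kernel" where
  "shift \<alpha> = (\<lambda>(x, s) (y, s'). if s = s' \<and> x = y + (spin_val s * fst (unit_vec \<alpha>),
                                               spin_val s * snd (unit_vec \<alpha>)) then 1 else 0)"

definition coin :: "(int \<times> int \<Rightarrow> bool \<Rightarrow> bool \<Rightarrow> complex) \<Rightarrow> kernel" where
  "coin C = (\<lambda>(x, s) (y, s'). if x = y then C x s s' else 0)"

definition walk :: "(int \<times> int \<Rightarrow> bool \<Rightarrow> bool \<Rightarrow> complex) \<Rightarrow>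
                    (int \<times> int \<Rightarrow> bool \<Rightarrow> bool \<Rightarrow> complex) \<Rightarrow> kernel" where
  "walk C1 C2 = kmult (shift 1) (kmult (coin C1) (kmult (shift 2) (coin C2)))"

definition box :: "nat \<Rightarrow> (int \<times> int) set" where
  "box L = {x. \<bar>fst x\<bar> \<le> int L \<and> \<bar>snd x\<bar> \<le> int L}"

definition boundary :: "nat \<Rightarrow> (int \<times> int) set" where
  "boundary L = {x. - int L - 1 \<le> fst x \<and> fst x \<le> int L \<and> - int L - 1 \<le> snd x \<and> snd x \<le> int L \<and>
                    (fst x \<in> {- int L - 1, int L} \<or> snd x \<in> {- int L - 1, int L})}"

definition zdist :: "int \<times> int \<Rightarrow> int \<times> int \<Rightarrow> real" where
  "zdist x y = sqrt (real_of_int ((fst x - fst y)\<^sup>2 + (snd x - snd y)\<^sup>2))"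

text \<open>(Delta Lambda)_2 = {x. dist(x, Delta Lambda) \<le> 2}; Delta Lambda is finite and nonempty,
  so the distance is attained.\<close>
definition boundary_nbhd2 :: "nat \<Rightarrow> (int \<times> int) set" where
  "boundary_nbhd2 L = {x. \<exists>y\<in>boundary L. zdist x y \<le> 2}"

end

theory Submission
  imports Defs
begin

lemma infsum_fin:
  fixes f :: "'a \<Rightarrow> complex"
  assumes "finite F" "\<And>b. b \<notin> F \<Longrightarrow> f b = 0"
  shows "infsum f UNIV = sum f F"
proof -
  have "infsum f UNIV = infsum f F"
    by (rule infsum_cong_neutral) (use assms in auto)
  then show ?thesis using assms by simp
qed

lemma kmult_fin:
  assumes "finite F" "\<And>b. b \<notin> F \<Longrightarrow> A a b * B b c = 0"
  shows "kmult A B a c = (\<Sum>b\<in>F. A a b * B b c)"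
  unfolding kmult_def by (rule infsum_fin) (use assms in auto)

definition nice :: "kernel \<Rightarrow> bool" where
  "nice K \<longleftrightarrow> (\<forall>c. finite {a. K a c \<noteq> 0}) \<and> (\<forall>a. finite {b. K a b \<noteq> 0})"

lemma nice_col: "nice K \<Longrightarrow> finite {a. K a c \<noteq> 0}" unfolding nice_def by blast
lemma nice_row: "nice K \<Longrightarrow> finite {b. K a b \<noteq> 0}" unfolding nice_def by blast

lemma kmult_row:
  assumes "nice A"
  shows "kmult A B a c = (\<Sum>b\<in>{b. A a b \<noteq> 0}. A a b * B b c)"
  by (rule kmult_fin) (use assms nice_row in auto)

lemma kmult_col:
  assumes "nice B"
  shows "kmult A B a c = (\<Sum>b\<in>{b. B b c \<noteq> 0}. A a b * B b c)"
  by (rule kmult_fin) (use assms nice_col in auto)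

lemma kmult_assoc:
  assumes "nice A" "nice B" "nice C"
  shows "kmult (kmult A B) C = kmult A (kmult B C)"
proof (intro ext)
  fix a d
  let ?Fb = "{b. A a b \<noteq> 0}" and ?Fc = "{c. C c d \<noteq> 0}"
  have "kmult (kmult A B) C a d = (\<Sum>c\<in>?Fc. kmult A B a c * C c d)"
    using kmult_col[OF assms(3)] by blast
  also have "\<dots> = (\<Sum>c\<in>?Fc. (\<Sum>b\<in>?Fb. A a b * B b c) * C c d)"
    using kmult_row[OF assms(1)] by simp
  also have "\<dots> = (\<Sum>c\<in>?Fc. \<Sum>b\<in>?Fb. A a b * B b c * C c d)"
    by (simp add: sum_distrib_right)
  also have "\<dots> = (\<Sum>b\<in>?Fb. \<Sum>c\<in>?Fc. A a b * B b c * C c d)"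
    by (rule sum.swap)
  also have "\<dots> = (\<Sum>b\<in>?Fb. A a b * (\<Sum>c\<in>?Fc. B b c * C c d))"
    by (simp add: sum_distrib_left mult.assoc)
  also have "\<dots> = (\<Sum>b\<in>?Fb. A a b * kmult B C b d)"
    using kmult_col[OF assms(3)] by simp
  also have "\<dots> = kmult A (kmult B C) a d"
    using kmult_row[OF assms(1)] by simp
  finally show "kmult (kmult A B) C a d = kmult A (kmult B C) a d" .
qed

lemma sum_nonzero_ex:
  assumes "sum f S \<noteq> (0::complex)" shows "\<exists>b\<in>S. f b \<noteq> 0"
  using assms sum.neutral[of S f] by blast

lemma nice_kmult:
  assumes "nice A" "nice B"
  shows "nice (kmult A B)"
  unfolding nice_def
proof (intro conjI allI)
  fix c
  have "{a. kmult A B a c \<noteq> 0} \<subseteq> (\<Union>b\<in>{b. B b c \<noteq> 0}. {a. A a b \<noteq> 0})"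
  proof
    fix a assume "a \<in> {a. kmult A B a c \<noteq> 0}"
    then have "(\<Sum>b\<in>{b. B b c \<noteq> 0}. A a b * B b c) \<noteq> 0"
      using kmult_col[OF assms(2)] by simp
    then obtain b where b: "b \<in> {b. B b c \<noteq> 0}" "A a b * B b c \<noteq> 0"
      using sum_nonzero_ex by blast
    then have "a \<in> {a. A a b \<noteq> 0}" by simp
    with b(1) show "a \<in> (\<Union>b\<in>{b. B b c \<noteq> 0}. {a. A a b \<noteq> 0})" by (rule UN_I)
  qed
  then show "finite {a. kmult A B a c \<noteq> 0}"
    by (rule finite_subset) (intro finite_UN_I nice_col assms)
next
  fix a
  have "{c. kmult A B a c \<noteq> 0} \<subseteq> (\<Union>b\<in>{b. A a b \<noteq> 0}. {c. B b c \<noteq> 0})"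
  proof
    fix c assume "c \<in> {c. kmult A B a c \<noteq> 0}"
    then have "(\<Sum>b\<in>{b. A a b \<noteq> 0}. A a b * B b c) \<noteq> 0"
      using kmult_row[OF assms(1)] by simp
    then obtain b where b: "b \<in> {b. A a b \<noteq> 0}" "A a b * B b c \<noteq> 0"
      using sum_nonzero_ex by blast
    then have "c \<in> {c. B b c \<noteq> 0}" by simp
    with b(1) show "c \<in> (\<Union>b\<in>{b. A a b \<noteq> 0}. {c. B b c \<noteq> 0})" by (rule UN_I)
  qed
  then show "finite {c. kmult A B a c \<noteq> 0}"
    by (rule finite_subset) (intro finite_UN_I nice_row assms)
qed

lemma nice_kadj: "nice K \<Longrightarrow> nice (kadj K)"
  unfolding nice_def kadj_def by (simp del: split_paired_All)

lemma kadj_kadj: "kadj (kadj K) = K"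
  unfolding kadj_def by simp

lemma kmult_kid_left: "kmult kid B = B"
proof (intro ext)
  fix a c show "kmult kid B a c = B a c"
    by (subst kmult_fin[where F="{a}"]) (auto simp: kid_def)
qed

lemma kmult_kid_right: "kmult B kid = B"
proof (intro ext)
  fix a c show "kmult B kid a c = B a c"
    by (subst kmult_fin[where F="{c}"]) (auto simp: kid_def)
qed

lemma kadj_kmult:
  assumes "nice A"
  shows "kadj (kmult A B) = kmult (kadj B) (kadj A)"
proof (intro ext)
  fix a c
  have "kadj (kmult A B) a c = cnj (\<Sum>b\<in>{b. A c b \<noteq> 0}. A c b * B b a)"
    unfolding kadj_def using kmult_row[OF assms] by simp
  also have "\<dots> = (\<Sum>b\<in>{b. A c b \<noteq> 0}. kadj B a b * kadj A b c)"
    by (simp add: kadj_def mult.commute)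
  also have "\<dots> = kmult (kadj B) (kadj A) a c"
    by (rule kmult_fin[symmetric]) (use assms nice_row in \<open>auto simp: kadj_def\<close>)
  finally show "kadj (kmult A B) a c = kmult (kadj B) (kadj A) a c" .
qed

definition good :: "kernel \<Rightarrow> bool" where
  "good K \<longleftrightarrow> nice K \<and> kmult (kadj K) K = kid \<and> kmult K (kadj K) = kid"

lemma good_mult:
  assumes "good A" "good B"
  shows "good (kmult A B)"
proof -
  have nA: "nice A" "nice (kadj A)" and nB: "nice B" "nice (kadj B)"
    using assms nice_kadj by (auto simp: good_def)
  have adj: "kadj (kmult A B) = kmult (kadj B) (kadj A)"
    using kadj_kmult[OF nA(1)] .
  have nAB: "nice (kmult A B)" using nA nB nice_kmult by blast
  have "kmult (kmult (kadj B) (kadj A)) (kmult A B)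
      = kmult (kadj B) (kmult (kadj A) (kmult A B))"
    by (rule kmult_assoc) (use nA nB nAB in auto)
  also have "kmult (kadj A) (kmult A B) = kmult (kmult (kadj A) A) B"
    by (rule kmult_assoc[symmetric]) (use nA nB in auto)
  also have "\<dots> = B" using assms by (simp add: good_def kmult_kid_left)
  finally have 1: "kmult (kmult (kadj B) (kadj A)) (kmult A B) = kid"
    using assms by (simp add: good_def)
  have nBA: "nice (kmult (kadj B) (kadj A))" using nA nB nice_kmult by blast
  have "kmult (kmult A B) (kmult (kadj B) (kadj A))
      = kmult A (kmult B (kmult (kadj B) (kadj A)))"
    by (rule kmult_assoc) (use nA nB nBA in auto)
  also have "kmult B (kmult (kadj B) (kadj A)) = kmult (kmult B (kadj B)) (kadj A)"
    by (rule kmult_assoc[symmetric]) (use nA nB in auto)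
  also have "\<dots> = kadj A" using assms by (simp add: good_def kmult_kid_left)
  finally have 2: "kmult (kmult A B) (kmult (kadj B) (kadj A)) = kid"
    using assms by (simp add: good_def)
  show ?thesis unfolding good_def adj using 1 2 nA nB nice_kmult by blast
qed

lemma iso_bounded:
  assumes nK: "nice K" and iso: "kmult (kadj K) K = kid"
  shows "kbounded K"
  unfolding kbounded_def
proof (intro exI allI impI conjI)
  fix f :: "idx \<Rightarrow> complex"
  assume fS: "finite {b. f b \<noteq> 0}"
  define S where "S = {b. f b \<noteq> 0}"
  define g where "g a = (\<Sum>b\<in>S. K a b * f b)" for a
  define G where "G = (\<Union>b\<in>S. {a. K a b \<noteq> 0})"
  have fG: "finite G" unfolding G_def S_def by (intro finite_UN_I fS nice_col nK)
  have g0: "g a = 0" if "a \<notin> G" for a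
    unfolding g_def by (rule sum.neutral) (use that in \<open>auto simp: G_def\<close>)
  have "(\<lambda>a. (cmod (g a))\<^sup>2) summable_on G" using fG by simp
  then show "(\<lambda>a. (cmod (\<Sum>b\<in>{b. f b \<noteq> 0}. K a b * f b))\<^sup>2) summable_on UNIV"
    unfolding g_def S_def[symmetric]
    by (rule summable_on_cong_neutral[THEN iffD1, rotated -1]) (use g0 in \<open>auto simp: g_def\<close>)
  have inf: "(\<Sum>\<^sub>\<infinity> a. (cmod (g a))\<^sup>2) = (\<Sum>a\<in>G. (cmod (g a))\<^sup>2)"
  proof -
    have "(\<Sum>\<^sub>\<infinity> a. (cmod (g a))\<^sup>2) = (\<Sum>\<^sub>\<infinity> a\<in>G. (cmod (g a))\<^sup>2)"
      by (rule infsum_cong_neutral) (use g0 in auto)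
    then show ?thesis using fG by simp
  qed
  have inner: "(\<Sum>a\<in>G. cnj (K a b') * K a b) = kid b' b" if "b \<in> S" for b b'
  proof -
    have "(\<Sum>a\<in>G. cnj (K a b') * K a b) = kmult (kadj K) K b' b"
      by (subst kmult_fin[where F=G]) (use fG that in \<open>auto simp: G_def kadj_def\<close>)
    then show ?thesis using iso by simp
  qed
  have "complex_of_real (\<Sum>a\<in>G. (cmod (g a))\<^sup>2) = (\<Sum>a\<in>G. g a * cnj (g a))"
    unfolding of_real_sum complex_norm_square by (rule refl)
  also have "\<dots> = (\<Sum>a\<in>G. \<Sum>b\<in>S. \<Sum>b'\<in>S. (K a b * f b) * (cnj (K a b') * cnj (f b')))"
    unfolding g_def by (simp add: sum_product)
  also have "\<dots> = (\<Sum>b\<in>S. \<Sum>a\<in>G. \<Sum>b'\<in>S. (K a b * f b) * (cnj (K a b') * cnj (f b')))"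
    by (rule sum.swap)
  also have "\<dots> = (\<Sum>b\<in>S. \<Sum>b'\<in>S. \<Sum>a\<in>G. (K a b * f b) * (cnj (K a b') * cnj (f b')))"
    by (rule sum.cong[OF refl], rule sum.swap)
  also have "\<dots> = (\<Sum>b\<in>S. \<Sum>b'\<in>S. (f b * cnj (f b')) * (\<Sum>a\<in>G. cnj (K a b') * K a b))"
    by (simp add: sum_distrib_left mult_ac)
  also have "\<dots> = (\<Sum>b\<in>S. \<Sum>b'\<in>S. (f b * cnj (f b')) * kid b' b)"
    using inner by simp
  also have "\<dots> = (\<Sum>b\<in>S. f b * cnj (f b))"
    using fS unfolding S_def by (simp add: kid_def if_distrib cong: if_cong)
  also have "\<dots> = complex_of_real (\<Sum>b\<in>S. (cmod (f b))\<^sup>2)"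
    unfolding of_real_sum complex_norm_square by (rule refl)
  finally have "(\<Sum>a\<in>G. (cmod (g a))\<^sup>2) = (\<Sum>b\<in>S. (cmod (f b))\<^sup>2)"
    using of_real_eq_iff by blast
  then show "(\<Sum>\<^sub>\<infinity> a. (cmod (\<Sum>b\<in>{b. f b \<noteq> 0}. K a b * f b))\<^sup>2)
         \<le> 1 * (\<Sum>b\<in>{b. f b \<noteq> 0}. (cmod (f b))\<^sup>2)"
    using inf unfolding g_def S_def by simp
qed

lemma good_kunitary: "good K \<Longrightarrow> kunitary K"
  unfolding good_def kunitary_def using iso_bounded by blast

definition Sperm :: "(idx \<Rightarrow> idx) \<Rightarrow> kernel" where
  "Sperm r a b = (if b = r a then 1 else 0)"

lemma Sperm_left: "kmult (Sperm r) B a c = B (r a) c"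
  by (subst kmult_fin[where F="{r a}"]) (auto simp: Sperm_def)

lemma good_Sperm:
  assumes rf: "\<And>a. r (f a) = a" and fr: "\<And>a. f (r a) = a"
  shows "good (Sperm r)"
  unfolding good_def
proof (intro conjI)
  show "nice (Sperm r)"
    unfolding nice_def
  proof (intro conjI allI)
    fix c
    have "{a. Sperm r a c \<noteq> 0} \<subseteq> {f c}" using fr by (auto simp: Sperm_def)
    then show "finite {a. Sperm r a c \<noteq> 0}" by (rule finite_subset) simp
  next
    fix a
    have "{b. Sperm r a b \<noteq> 0} \<subseteq> {r a}" by (auto simp: Sperm_def)
    then show "finite {b. Sperm r a b \<noteq> 0}" by (rule finite_subset) simp
  qed
  show "kmult (kadj (Sperm r)) (Sperm r) = kid"
  proof (intro ext)
    fix a c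
    show "kmult (kadj (Sperm r)) (Sperm r) a c = kid a c"
      by (subst kmult_fin[where F="{f a}"]) (use rf fr in \<open>auto simp: Sperm_def kadj_def kid_def\<close>)
  qed
  show "kmult (Sperm r) (kadj (Sperm r)) = kid"
  proof (intro ext)
    fix a c
    show "kmult (Sperm r) (kadj (Sperm r)) a c = kid a c"
      unfolding Sperm_left by (auto simp: Sperm_def kadj_def kid_def dest: arg_cong[where f=f] simp: fr)
  qed
qed

lemma coin_left:
  "kmult (coin C) B (x, s) c = C x s True * B (x, True) c + C x s False * B (x, False) c"
  by (subst kmult_fin[where F="{(x,True),(x,False)}"]) (auto simp: coin_def)

lemma good_coin:
  assumes U: "\<forall>x. unitary2 (C x)"
  shows "good (coin C)"
  unfolding good_def
proof (intro conjI)
  show "nice (coin C)"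
    unfolding nice_def
  proof (intro conjI allI)
    fix c :: idx
    have "{a. coin C a c \<noteq> 0} \<subseteq> {(fst c,True),(fst c,False)}"
      by (cases c) (auto simp: coin_def split: if_splits)
    then show "finite {a. coin C a c \<noteq> 0}" by (rule finite_subset) simp
  next
    fix a :: idx
    have "{b. coin C a b \<noteq> 0} \<subseteq> {(fst a,True),(fst a,False)}"
      by (cases a) (auto simp: coin_def split: if_splits)
    then show "finite {b. coin C a b \<noteq> 0}" by (rule finite_subset) simp
  qed
  show "kmult (kadj (coin C)) (coin C) = kid"
  proof (intro ext)
    fix a c :: idx
    obtain x s y s' where ac: "a = (x, s)" "c = (y, s')" by (cases a, cases c) auto
    have u: "(\<Sum>b\<in>UNIV. cnj (C x b s) * C x b s') = (if s = s' then 1 else 0)"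
      using U unfolding unitary2_def by blast
    show "kmult (kadj (coin C)) (coin C) a c = kid a c"
      unfolding ac
      by (subst kmult_fin[where F="{(x,True),(x,False)}"])
         (use u in \<open>auto simp: coin_def kadj_def kid_def UNIV_bool add.commute\<close>)
  qed
  show "kmult (coin C) (kadj (coin C)) = kid"
  proof (intro ext)
    fix a c :: idx
    obtain x s y s' where ac: "a = (x, s)" "c = (y, s')" by (cases a, cases c) auto
    have u: "(\<Sum>b\<in>UNIV. C x s b * cnj (C x s' b)) = (if s = s' then 1 else 0)"
      using U unfolding unitary2_def by blast
    show "kmult (coin C) (kadj (coin C)) a c = kid a c"
      unfolding ac coin_left
      using u by (auto simp: coin_def kadj_def kid_def UNIV_bool add.commute)
  qed
qed

fun r01 :: "idx \<Rightarrow> idx" where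
  "r01 ((x1, x2), s) = ((x1 - spin_val s, x2), s)"
fun f01 :: "idx \<Rightarrow> idx" where
  "f01 ((x1, x2), s) = ((x1 + spin_val s, x2), s)"
fun r02 :: "idx \<Rightarrow> idx" where
  "r02 ((x1, x2), s) = ((x1, x2 - spin_val s), s)"
fun f02 :: "idx \<Rightarrow> idx" where
  "f02 ((x1, x2), s) = ((x1, x2 + spin_val s), s)"

fun r1 :: "int \<Rightarrow> idx \<Rightarrow> idx" where
  "r1 l ((x1, x2), s) = (if -l \<le> x2 \<and> x2 \<le> l \<and>
      ((s \<and> (x1 = l + 1 \<or> x1 = -l)) \<or> (\<not> s \<and> (x1 = l \<or> x1 = -l - 1)))
     then ((x1, x2), \<not> s) else ((x1 - spin_val s, x2), s))"
fun f1 :: "int \<Rightarrow> idx \<Rightarrow> idx" where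
  "f1 l ((x1, x2), s) = (if -l \<le> x2 \<and> x2 \<le> l \<and>
      ((s \<and> (x1 = l \<or> x1 = -l - 1)) \<or> (\<not> s \<and> (x1 = l + 1 \<or> x1 = -l)))
     then ((x1, x2), \<not> s) else ((x1 + spin_val s, x2), s))"
fun r2 :: "int \<Rightarrow> idx \<Rightarrow> idx" where
  "r2 l ((x1, x2), s) = (if -l \<le> x1 \<and> x1 \<le> l \<and>
      ((s \<and> (x2 = l + 1 \<or> x2 = -l)) \<or> (\<not> s \<and> (x2 = l \<or> x2 = -l - 1)))
     then ((x1, x2), \<not> s) else ((x1, x2 - spin_val s), s))"
fun f2 :: "int \<Rightarrow> idx \<Rightarrow> idx" where
  "f2 l ((x1, x2), s) = (if -l \<le> x1 \<and> x1 \<le> l \<and>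
      ((s \<and> (x2 = l \<or> x2 = -l - 1)) \<or> (\<not> s \<and> (x2 = l + 1 \<or> x2 = -l)))
     then ((x1, x2), \<not> s) else ((x1, x2 + spin_val s), s))"

lemma r01_f01: "r01 (f01 a) = a" "f01 (r01 a) = a"
  by (cases a, auto)+
lemma r02_f02: "r02 (f02 a) = a" "f02 (r02 a) = a"
  by (cases a, auto)+
lemma r1_f1: "l \<ge> 0 \<Longrightarrow> r1 l (f1 l a) = a" "l \<ge> 0 \<Longrightarrow> f1 l (r1 l a) = a"
  by (cases a, auto simp: spin_val_def)+
lemma r2_f2: "l \<ge> 0 \<Longrightarrow> r2 l (f2 l a) = a" "l \<ge> 0 \<Longrightarrow> f2 l (r2 l a) = a"
  by (cases a, auto simp: spin_val_def)+

lemma shift1: "shift 1 = Sperm r01"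
proof (intro ext)
  fix a b :: idx
  show "shift 1 a b = Sperm r01 a b"
    by (cases a, cases b) (auto simp: shift_def Sperm_def unit_vec_def)
qed

lemma shift2: "shift 2 = Sperm r02"
proof (intro ext)
  fix a b :: idx
  show "shift 2 a b = Sperm r02 a b"
    by (cases a, cases b) (auto simp: shift_def Sperm_def unit_vec_def)
qed

definition Fm :: "(int \<times> int \<Rightarrow> bool \<Rightarrow> bool \<Rightarrow> complex) \<Rightarrow> (int \<times> int \<Rightarrow> bool \<Rightarrow> bool \<Rightarrow> complex)
   \<Rightarrow> (idx \<Rightarrow> idx) \<Rightarrow> (idx \<Rightarrow> idx) \<Rightarrow> kernel" where
  "Fm C1 C2 p q a c = C1 (fst (p a)) (snd (p a)) True * coin C2 (q (fst (p a), True)) c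
                    + C1 (fst (p a)) (snd (p a)) False * coin C2 (q (fst (p a), False)) c"

lemma Fm_eq: "kmult (Sperm p) (kmult (coin C1) (kmult (Sperm q) (coin C2))) a c = Fm C1 C2 p q a c"
  unfolding Sperm_left Fm_def
  using coin_left[of C1 "\<lambda>a. coin C2 (q a)" "fst (p a)" "snd (p a)" c]
  by simp

lemma coin_nz: "coin C w c \<noteq> 0 \<Longrightarrow> fst w = fst c"
  by (cases w, cases c) (auto simp: coin_def split: if_splits)

lemma Fm_nz: "Fm C1 C2 p q a c \<noteq> 0 \<Longrightarrow> \<exists>t. fst (q (fst (p a), t)) = fst c"
proof -
  assume "Fm C1 C2 p q a c \<noteq> 0"
  then have "coin C2 (q (fst (p a), True)) c \<noteq> 0 \<or> coin C2 (q (fst (p a), False)) c \<noteq> 0"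
    unfolding Fm_def by auto
  then show ?thesis using coin_nz by blast
qed

lemma r1_box: "fst (r1 (int L) ((x1,x2),s)) \<in> box L \<longleftrightarrow> (x1,x2) \<in> box L"
  by (auto simp: box_def spin_val_def)
lemma r2_box: "fst (r2 (int L) ((x1,x2),s)) \<in> box L \<longleftrightarrow> (x1,x2) \<in> box L"
  by (auto simp: box_def spin_val_def)

lemma small_sq: "\<bar>d::int\<bar> \<le> 1 \<Longrightarrow> d^2 \<le> 1"
proof -
  assume "\<bar>d\<bar> \<le> 1"
  then have "d = -1 \<or> d = 0 \<or> d = 1" by arith
  then show ?thesis by auto
qed

lemma zdist_le2:
  assumes "\<bar>fst x - fst b\<bar> \<le> 1" "\<bar>snd x - snd b\<bar> \<le> 1"
  shows "zdist x b \<le> 2"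
proof -
  have "(fst x - fst b)^2 + (snd x - snd b)^2 \<le> 4"
    using small_sq[OF assms(1)] small_sq[OF assms(2)] by linarith
  then have "real_of_int ((fst x - fst b)^2 + (snd x - snd b)^2) \<le> 4" by linarith
  then have "zdist x b \<le> sqrt 4" unfolding zdist_def by (rule real_sqrt_le_mono)
  moreover have "sqrt 4 = (2::real)" using real_sqrt_abs[of 2] by simp
  ultimately show ?thesis by simp
qed

lemma nbhdI:
  assumes "b \<in> boundary L" "\<bar>fst x - fst b\<bar> \<le> 1" "\<bar>snd x - snd b\<bar> \<le> 1"
  shows "x \<in> boundary_nbhd2 L"
  unfolding boundary_nbhd2_def using assms zdist_le2 by blast

lemma nearI:
  fixes y1 y2 :: int
  assumes "l = int L" "-l-2 \<le> y1" "y1 \<le> l+1" "-l-2 \<le> y2" "y2 \<le> l+1"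
    "y1 \<ge> l-1 \<or> y1 \<le> -l \<or> y2 \<ge> l-1 \<or> y2 \<le> -l"
  shows "(y1, y2) \<in> boundary_nbhd2 L"
proof -
  consider "y1 \<ge> l-1" | "y1 \<le> -l" | "y2 \<ge> l-1" | "y2 \<le> -l" using assms(6) by blast
  then show ?thesis
  proof cases
    case 1
    show ?thesis
      by (rule nbhdI[where b="(l, max (-l-1) (min y2 l))"]) (use assms 1 in \<open>auto simp: boundary_def\<close>)
  next
    case 2
    show ?thesis
      by (rule nbhdI[where b="(-l-1, max (-l-1) (min y2 l))"]) (use assms 2 in \<open>auto simp: boundary_def\<close>)
  next
    case 3
    show ?thesis
      by (rule nbhdI[where b="(max (-l-1) (min y1 l), l)"]) (use assms 3 in \<open>auto simp: boundary_def\<close>)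
  next
    case 4
    show ?thesis
      by (rule nbhdI[where b="(max (-l-1) (min y1 l), -l-1)"]) (use assms 4 in \<open>auto simp: boundary_def\<close>)
  qed
qed

lemma caseA:
  assumes "r1 l ((x1,x2),s) \<noteq> r01 ((x1,x2),s)" "p = r1 l \<or> p = r01" "fst (p ((x1,x2),s)) = (z1,z2)"
  shows "-l \<le> x2 \<and> x2 \<le> l \<and> z2 = x2 \<and> (x1 = l \<or> x1 = l+1 \<or> x1 = -l-1 \<or> x1 = -l)
         \<and> (z1 = l \<or> z1 = l+1 \<or> z1 = -l-1 \<or> z1 = -l)"
  using assms by (auto simp: spin_val_def split: if_splits)

lemma q_close:
  assumes "q = r2 l \<or> q = r02" "fst (q ((z1,z2),t)) = (y1,y2)"
  shows "y1 = z1 \<and> z2 - 1 \<le> y2 \<and> y2 \<le> z2 + 1"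
  using assms by (auto simp: spin_val_def split: if_splits)

lemma p_close:
  assumes "p = r1 l \<or> p = r01" "fst (p ((x1,x2),s)) = (z1,z2)"
  shows "z2 = x2 \<and> x1 - 1 \<le> z1 \<and> z1 \<le> x1 + 1"
  using assms by (auto simp: spin_val_def split: if_splits)

lemma caseB:
  assumes "r2 l ((z1,z2),t) \<noteq> r02 ((z1,z2),t)"
    "fst (r2 l ((z1,z2),t)) = (y1,y2) \<or> fst (r02 ((z1,z2),t)) = (y1,y2)"
  shows "-l \<le> z1 \<and> z1 \<le> l \<and> (z2 = l \<or> z2 = l+1 \<or> z2 = -l-1 \<or> z2 = -l) \<and> y1 = z1
         \<and> (y2 = l \<or> y2 = l+1 \<or> y2 = -l-1 \<or> y2 = -l)"
  using assms by (auto simp: spin_val_def split: if_splits)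

lemma diff_near:
  assumes ne: "Fm C1 C2 (r1 (int L)) (r2 (int L)) a c \<noteq> Fm C1 C2 r01 r02 a c"
  shows "fst a \<in> boundary_nbhd2 L \<and> fst c \<in> boundary_nbhd2 L"
proof -
  define l where "l = int L"
  have l0: "l \<ge> 0" unfolding l_def by simp
  obtain x1 x2 s y1 y2 s' where a: "a = ((x1,x2),s)" and c: "c = ((y1,y2),s')"
    by (cases a, cases c) auto
  show ?thesis
  proof (cases "r1 l a = r01 a")
    case False
    have "Fm C1 C2 (r1 l) (r2 l) a c \<noteq> 0 \<or> Fm C1 C2 r01 r02 a c \<noteq> 0"
      using ne unfolding l_def by auto
    then obtain p q where pq: "p = r1 l \<or> p = r01" "q = r2 l \<or> q = r02" "Fm C1 C2 p q a c \<noteq> 0"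
      by blast
    obtain t where t: "fst (q (fst (p a), t)) = fst c" using Fm_nz[OF pq(3)] by blast
    obtain z1 z2 where z: "fst (p a) = (z1, z2)" by (cases "fst (p a)") auto
    have A: "-l \<le> x2 \<and> x2 \<le> l \<and> z2 = x2 \<and> (x1 = l \<or> x1 = l+1 \<or> x1 = -l-1 \<or> x1 = -l)
         \<and> (z1 = l \<or> z1 = l+1 \<or> z1 = -l-1 \<or> z1 = -l)"
      using caseA[of l x1 x2 s p z1 z2] False pq(1) z unfolding a by blast
    have Q: "y1 = z1 \<and> z2 - 1 \<le> y2 \<and> y2 \<le> z2 + 1"
      using q_close[of q l z1 z2 t y1 y2] pq(2) t z c by simp
    have "(x1, x2) \<in> boundary_nbhd2 L"
      by (rule nearI[OF l_def]) (use A l0 in arith)+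
    moreover have "(y1, y2) \<in> boundary_nbhd2 L"
      by (rule nearI[OF l_def]) (use A Q l0 in arith)+
    ultimately show ?thesis using a c by simp
  next
    case True
    obtain z1 z2 u where z: "r01 a = ((z1, z2), u)" by (metis prod.collapse)
    have "\<exists>t. coin C2 (r2 l ((z1,z2),t)) c \<noteq> coin C2 (r02 ((z1,z2),t)) c"
    proof (rule ccontr)
      assume "\<not> ?thesis"
      then have "Fm C1 C2 (r1 l) (r2 l) a c = Fm C1 C2 r01 r02 a c"
        unfolding Fm_def True z by (simp del: r2.simps r02.simps r1.simps r01.simps)
      then show False using ne unfolding l_def by simp
    qed
    then obtain t where t: "coin C2 (r2 l ((z1,z2),t)) c \<noteq> coin C2 (r02 ((z1,z2),t)) c" by blast
    then have t1: "r2 l ((z1,z2),t) \<noteq> r02 ((z1,z2),t)" by metis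
    have "coin C2 (r2 l ((z1,z2),t)) c \<noteq> 0 \<or> coin C2 (r02 ((z1,z2),t)) c \<noteq> 0"
      using t by (auto simp del: r2.simps r02.simps)
    then have t2: "fst (r2 l ((z1,z2),t)) = (y1,y2) \<or> fst (r02 ((z1,z2),t)) = (y1,y2)"
      using coin_nz[of C2 "r2 l ((z1,z2),t)" c] coin_nz[of C2 "r02 ((z1,z2),t)" c] c
      by (simp del: r2.simps r02.simps) blast
    have B: "-l \<le> z1 \<and> z1 \<le> l \<and> (z2 = l \<or> z2 = l+1 \<or> z2 = -l-1 \<or> z2 = -l) \<and> y1 = z1
         \<and> (y2 = l \<or> y2 = l+1 \<or> y2 = -l-1 \<or> y2 = -l)"
      using caseB[OF t1 t2] .
    have P: "z2 = x2 \<and> x1 - 1 \<le> z1 \<and> z1 \<le> x1 + 1"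
      using p_close[of r01 l x1 x2 s z1 z2] z a by auto
    have "(x1, x2) \<in> boundary_nbhd2 L"
      by (rule nearI[OF l_def]) (use B P l0 in arith)+
    moreover have "(y1, y2) \<in> boundary_nbhd2 L"
      by (rule nearI[OF l_def]) (use B l0 in arith)+
    ultimately show ?thesis using a c by simp
  qed
qed

theorem mainTheorem5:
  fixes L :: nat
    and C1 C2 :: "int \<times> int \<Rightarrow> bool \<Rightarrow> bool \<Rightarrow> complex"
  assumes "\<forall>x. unitary2 (C1 x)"
    and "\<forall>x. unitary2 (C2 x)"
  shows "\<exists>Wd :: kernel.
           kunitary Wd \<and>
           kunitary_on (box L \<times> UNIV) Wd \<and>
           (\<forall>x s y s'. walk C1 C2 (x, s) (y, s') \<noteq> Wd (x, s) (y, s') \<longrightarrow>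
                x \<in> boundary_nbhd2 L \<and> y \<in> boundary_nbhd2 L)"
proof -
  define l where "l = int L"
  have l0: "l \<ge> 0" unfolding l_def by simp
  define Wd where "Wd = kmult (Sperm (r1 l)) (kmult (coin C1) (kmult (Sperm (r2 l)) (coin C2)))"
  have gW: "good Wd" unfolding Wd_def
    by (intro good_mult good_Sperm[OF r1_f1[OF l0]] good_Sperm[OF r2_f2[OF l0]] good_coin assms)
  have WdF: "Wd a c = Fm C1 C2 (r1 l) (r2 l) a c" for a c
    unfolding Wd_def by (rule Fm_eq)
  have walkF: "walk C1 C2 a c = Fm C1 C2 r01 r02 a c" for a c
    unfolding walk_def shift1 shift2 by (rule Fm_eq)
  have dec: "fst a \<in> box L \<longleftrightarrow> fst c \<in> box L" if nz: "Wd a c \<noteq> 0" for a c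
  proof -
    obtain t where t: "fst (r2 l (fst (r1 l a), t)) = fst c"
      using Fm_nz nz unfolding WdF by blast
    obtain x1 x2 s where a: "a = ((x1,x2),s)" by (metis prod.collapse)
    obtain z1 z2 u where z: "r1 l a = ((z1,z2),u)" by (metis prod.collapse)
    have "fst c \<in> box L \<longleftrightarrow> (z1,z2) \<in> box L"
      using r2_box[of L z1 z2 t] t z unfolding l_def by simp
    also have "\<dots> \<longleftrightarrow> (x1,x2) \<in> box L"
      using r1_box[of L x1 x2 s] z a unfolding l_def by simp
    finally show ?thesis using a by simp
  qed
  define A where "A = box L \<times> (UNIV :: bool set)"
  have fA: "finite A"
  proof -
    have "box L \<subseteq> {-l..l} \<times> {-l..l}" unfolding box_def l_def by auto
    then have "finite (box L)" by (rule finite_subset) simp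
    then show ?thesis unfolding A_def by simp
  qed
  have inA: "b \<in> A \<longleftrightarrow> fst b \<in> box L" for b unfolding A_def by (cases b) auto
  have iso1: "kmult (kadj Wd) Wd = kid" and iso2: "kmult Wd (kadj Wd) = kid"
    using gW by (auto simp: good_def)
  have z1: "Wd b a = 0" if "b \<notin> A" "a \<in> A" for a b
    using dec[of b a] inA[of a] inA[of b] that by blast
  have z2: "Wd a b = 0" if "b \<notin> A" "a \<in> A" for a b
    using dec[of a b] inA[of a] inA[of b] that by blast
  have "kunitary_on A Wd"
    unfolding kunitary_on_def
  proof (intro conjI ballI)
    fix a c assume a: "a \<in> A" and c: "c \<in> A"
    have "(\<Sum>b\<in>A. cnj (Wd b a) * Wd b c) = kmult (kadj Wd) Wd a c"
      by (subst kmult_fin[where F=A]) (use fA a z1 z2 in \<open>simp_all add: kadj_def\<close>)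
    then show "(\<Sum>b\<in>A. cnj (Wd b a) * Wd b c) = kid a c" using iso1 by simp
  next
    fix a c assume a: "a \<in> A" and c: "c \<in> A"
    have "(\<Sum>b\<in>A. Wd a b * cnj (Wd c b)) = kmult Wd (kadj Wd) a c"
      by (subst kmult_fin[where F=A]) (use fA a z1 z2 in \<open>simp_all add: kadj_def\<close>)
    then show "(\<Sum>b\<in>A. Wd a b * cnj (Wd c b)) = kid a c" using iso2 by simp
  qed
  moreover have "kunitary Wd" using gW by (rule good_kunitary)
  moreover have "\<forall>x s y s'. walk C1 C2 (x, s) (y, s') \<noteq> Wd (x, s) (y, s') \<longrightarrow>
                x \<in> boundary_nbhd2 L \<and> y \<in> boundary_nbhd2 L"
  proof (intro allI impI)
    fix x s y s'
    assume "walk C1 C2 (x, s) (y, s') \<noteq> Wd (x, s) (y, s')"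
    then have "Fm C1 C2 (r1 (int L)) (r2 (int L)) (x, s) (y, s') \<noteq> Fm C1 C2 r01 r02 (x, s) (y, s')"
      unfolding WdF walkF l_def by simp
    then show "x \<in> boundary_nbhd2 L \<and> y \<in> boundary_nbhd2 L"
      using diff_near by fastforce
  qed
  ultimately show ?thesis unfolding A_def by blast
qed

end
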